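(* For every integer $k\ge 1$, the ordinary generating function $F^{-}_k(x)=\sum_{n\ge1} f^{(n)}_k x^n$, where $f^{(n)}_k$ is the number of trees $t\in\mathcal{T}_n$ with $\gamma(t)\le k$, satisfies $$F^{-}_k = x + (F^{-}_k)^2 - 2^{k-1}x^{k+1},$$ and consequently $$F^{-}_k(x)=\frac{1-\sqrt{1-4x+2^{k+1}x^{k+1}}}{2}.$$
   Context: $\mathcal{T}$ denotes the class of ordered (plane) rooted binary trees, in which every internal node has exactly two ordered children (left and right); the size of a tree is its number of leaves, and $\mathcal{T}_n$ is the set of such trees of size $n$. A tree is a caterpillar if every node is either a leaf or has at least one leaf among its direct children (the single-leaf tree is the caterpillar of size 1). For a tree $t$ and a node $v$, the subtree of $t$ at $v$ consists of $v$ together with all its descendants. $\gamma(t)$ is the largest size of a caterpillar that occurs as the subtree of $t$ at some node of $t$. *)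

theory Defs
  imports Complex_Main "HOL-Computational_Algebra.Formal_Power_Series"
begin

datatype btree = Leaf | Node btree btree

fun tsize :: "btree \<Rightarrow> nat" where
  "tsize Leaf = 1"
| "tsize (Node l r) = tsize l + tsize r"

fun caterpillar :: "btree \<Rightarrow> bool" where
  "caterpillar Leaf = True"
| "caterpillar (Node l r) = ((l = Leaf \<or> r = Leaf) \<and> caterpillar l \<and> caterpillar r)"

fun subtrees :: "btree \<Rightarrow> btree set" where
  "subtrees Leaf = {Leaf}"
| "subtrees (Node l r) = insert (Node l r) (subtrees l \<union> subtrees r)"

definition gamma :: "btree \<Rightarrow> nat" where
  "gamma t = Max (tsize ` {s \<in> subtrees t. caterpillar s})"

definition fcount :: "nat \<Rightarrow> nat \<Rightarrow> nat" where
  "fcount k n = card {t. tsize t = n \<and> gamma t \<le> k}"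

definition Fminus :: "nat \<Rightarrow> real fps" where
  "Fminus k = Abs_fps (\<lambda>n. if n = 0 then 0 else real (fcount k n))"

end

theory Submission
  imports Defs
begin


lemma tsize_pos: "tsize t \<ge> 1" by (induction t) auto

lemma Leaf_in_subtrees: "Leaf \<in> subtrees t" by (induction t) auto
lemma self_in_subtrees: "t \<in> subtrees t" by (cases t) auto
lemma finite_subtrees: "finite (subtrees t)" by (induction t) auto

lemma subtrees_size: "s \<in> subtrees t \<Longrightarrow> tsize s \<le> tsize t"
  by (induction t) auto

lemma cat_subtrees: "caterpillar t \<Longrightarrow> s \<in> subtrees t \<Longrightarrow> caterpillar s"
  by (induction t) auto

definition good :: "nat \<Rightarrow> btree \<Rightarrow> bool" where
  "good k t = (\<forall>s\<in>subtrees t. caterpillar s \<longrightarrow> tsize s \<le> k)"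

lemma gamma_good: "(gamma t \<le> k) = good k t"
proof -
  have f: "finite (tsize ` {s \<in> subtrees t. caterpillar s})" using finite_subtrees by auto
  have ne: "tsize ` {s \<in> subtrees t. caterpillar s} \<noteq> {}" using Leaf_in_subtrees[of t] by auto
  show ?thesis unfolding gamma_def good_def using Max_le_iff[OF f ne] by auto
qed

lemma good_Leaf[simp]: "good k Leaf = (1 \<le> k)" by (simp add: good_def)

lemma good_Node: "good k (Node l r) = (good k l \<and> good k r \<and> \<not> (caterpillar (Node l r) \<and> tsize l + tsize r > k))"
  unfolding good_def by (auto simp del: caterpillar.simps)

lemma finite_size: "finite {t. tsize t = n}"
proof (induction n rule: less_induct)
  case (less n)
  have "{t. tsize t = n} \<subseteq> {Leaf} \<union> case_prod Node ` (\<Union>i\<in>{1..<n}. {t. tsize t = i} \<times> {t. tsize t = n - i})"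
  proof
    fix t assume "t \<in> {t. tsize t = n}"
    then show "t \<in> {Leaf} \<union> case_prod Node ` (\<Union>i\<in>{1..<n}. {t. tsize t = i} \<times> {t. tsize t = n - i})"
    proof (cases t)
      case (Node l r)
      with \<open>t \<in> _\<close> tsize_pos[of r] tsize_pos[of l] have "(l, r) \<in> (\<Union>i\<in>{1..<n}. {t. tsize t = i} \<times> {t. tsize t = n - i})"
        by auto
      then show ?thesis using Node by force
    qed auto
  qed
  moreover have "finite ({Leaf} \<union> case_prod Node ` (\<Union>i\<in>{1..<n}. {t. tsize t = i} \<times> {t. tsize t = n - i}))"
    using less by (intro finite_UnI finite_imageI finite_UN_I finite_cartesian_product) auto
  ultimately show ?case by (rule finite_subset)
qed

definition Cat :: "nat \<Rightarrow> btree set" where "Cat m = {t. caterpillar t \<and> tsize t = m}"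

lemma size1: "tsize s = 1 \<Longrightarrow> s = Leaf"
proof (cases s)
  case (Node l r)
  assume "tsize s = 1" then show ?thesis using Node tsize_pos[of l] tsize_pos[of r] by auto
qed auto

lemma size2: "tsize t = 2 \<Longrightarrow> t = Node Leaf Leaf"
proof (cases t)
  case (Node l r)
  assume "tsize t = 2"
  with Node tsize_pos[of l] tsize_pos[of r] have "tsize l = 1" "tsize r = 1" by auto
  then show ?thesis using Node size1 by auto
qed auto

lemma card_Cat: "m \<ge> 2 \<Longrightarrow> card (Cat m) = 2 ^ (m - 2)"
proof (induction m rule: dec_induct)
  case base
  have "Cat 2 = {Node Leaf Leaf}" unfolding Cat_def using size2 by auto
  then show ?case by simp
next
  case (step m)
  have eq: "Cat (Suc m) = Node Leaf ` Cat m \<union> (\<lambda>s. Node s Leaf) ` Cat m"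
  proof
    show "Cat (Suc m) \<subseteq> Node Leaf ` Cat m \<union> (\<lambda>s. Node s Leaf) ` Cat m"
    proof
      fix t assume t: "t \<in> Cat (Suc m)"
      then show "t \<in> Node Leaf ` Cat m \<union> (\<lambda>s. Node s Leaf) ` Cat m"
      proof (cases t)
        case Leaf then show ?thesis using t step(1) by (auto simp: Cat_def)
      next
        case (Node l r)
        then show ?thesis using t by (auto simp: Cat_def image_iff)
      qed
    qed
    show "Node Leaf ` Cat m \<union> (\<lambda>s. Node s Leaf) ` Cat m \<subseteq> Cat (Suc m)"
      by (auto simp: Cat_def)
  qed
  have fin: "finite (Cat m)" using finite_size[of m] by (simp add: Cat_def)
  have disj: "Node Leaf ` Cat m \<inter> (\<lambda>s. Node s Leaf) ` Cat m = {}"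
    using step(1) by (auto simp: Cat_def)
  have "card (Cat (Suc m)) = card (Node Leaf ` Cat m) + card ((\<lambda>s. Node s Leaf) ` Cat m)"
    unfolding eq using fin disj by (simp add: card_Un_disjoint)
  also have "\<dots> = card (Cat m) + card (Cat m)"
    by (simp add: card_image inj_on_def)
  also have "\<dots> = 2 ^ (Suc m - 2)"
  proof -
    have "Suc m - 2 = Suc (m - 2)" using step(1) by arith
    then show ?thesis using step(3) by simp
  qed
  finally show ?case .
qed

definition G :: "nat \<Rightarrow> nat \<Rightarrow> btree set" where "G k n = {t. tsize t = n \<and> good k t}"

lemma fcount_G: "fcount k n = card (G k n)"
  unfolding fcount_def G_def gamma_good ..

lemma finite_G: "finite (G k n)"
  using finite_size[of n] by (rule finite_subset[rotated]) (auto simp: G_def)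

definition P :: "nat \<Rightarrow> nat \<Rightarrow> (btree \<times> btree) set" where
  "P k n = {(l,r). good k l \<and> good k r \<and> tsize l + tsize r = n}"

lemma P_eq: "P k n = (\<Union>i\<in>{0..n}. G k i \<times> G k (n - i))"
    by (auto simp: P_def G_def)
lemma finite_P: "finite (P k n)" unfolding P_eq by (intro finite_UN_I finite_cartesian_product finite_G) simp

lemma card_P: "card (P k n) = (\<Sum>i=0..n. card (G k i) * card (G k (n - i)))"
proof -
  note P_eq
  moreover have "card (\<Union>i\<in>{0..n}. G k i \<times> G k (n - i)) = (\<Sum>i=0..n. card (G k i \<times> G k (n - i)))"
    by (rule card_UN_disjoint) (simp add: finite_G, simp add: finite_G, auto simp: G_def)
  ultimately show ?thesis by (simp add: card_cartesian_product)
qed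

lemma good_cat: "caterpillar t \<Longrightarrow> tsize t \<le> k \<Longrightarrow> good k t"
  unfolding good_def using subtrees_size by fastforce

lemma card_bad:
  assumes "k \<ge> 1" "n \<ge> 2"
  shows "card {(l,r) \<in> P k n. caterpillar (Node l r) \<and> n > k} = (if n = k + 1 then 2 ^ (k - 1) else 0)"
proof (cases "n = k + 1")
  case True
  have "{(l,r) \<in> P k n. caterpillar (Node l r) \<and> n > k} = {(l,r). caterpillar (Node l r) \<and> tsize l + tsize r = n}"
  proof (auto simp: P_def simp del: caterpillar.simps)
    fix l r assume "caterpillar (Node l r)" "n = tsize l + tsize r"
    then show "good k l" "good k r" using True tsize_pos[of l] tsize_pos[of r]
      by (auto intro!: good_cat)
  qed (use True in auto)
  moreover have ceq: "Cat n = case_prod Node ` {(l,r). caterpillar (Node l r) \<and> tsize l + tsize r = n}"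
  proof
    show "Cat n \<subseteq> case_prod Node ` {(l,r). caterpillar (Node l r) \<and> tsize l + tsize r = n}"
    proof
      fix t assume "t \<in> Cat n" then show "t \<in> case_prod Node ` {(l,r). caterpillar (Node l r) \<and> tsize l + tsize r = n}"
        using assms by (cases t) (auto simp: Cat_def image_iff simp del: caterpillar.simps)
    qed
  qed (auto simp: Cat_def simp del: caterpillar.simps)
  moreover have "card (Cat n) = card {(l,r). caterpillar (Node l r) \<and> tsize l + tsize r = n}"
    unfolding ceq by (rule card_image) (auto simp: inj_on_def)
  ultimately have "card {(l,r) \<in> P k n. caterpillar (Node l r) \<and> n > k} = card (Cat n)"
    by simp
  then show ?thesis using card_Cat[of n] assms True by simp
next
  case False
  have "False" if a: "(l,r) \<in> P k n" "caterpillar (Node l r)" "n > k" for l r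
  proof -
    have *: "good k l" "good k r" "n = tsize l + tsize r" 
      "l = Leaf \<or> r = Leaf" "caterpillar l" "caterpillar r" using a by (auto simp: P_def)
    have "tsize l \<le> k" using *(1,5) self_in_subtrees[of l] by (auto simp: good_def)
    moreover have "tsize r \<le> k" using *(2,6) self_in_subtrees[of r] by (auto simp: good_def)
    ultimately show False using * a(3) False by (cases "l = Leaf") auto
  qed
  then have E: "{(l,r) \<in> P k n. caterpillar (Node l r) \<and> n > k} = {}" by blast
  show ?thesis unfolding E using False by simp
qed

lemma rec_G:
  assumes "k \<ge> 1" "n \<ge> 2"
  shows "real (card (G k n)) = (\<Sum>i=0..n. real (card (G k i)) * real (card (G k (n - i)))) - (if n = k + 1 then 2 ^ (k - 1) else 0)"
proof -
  let ?B = "{(l,r) \<in> P k n. caterpillar (Node l r) \<and> n > k}"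
  have Geq: "G k n = case_prod Node ` (P k n - ?B)"
  proof
    show "G k n \<subseteq> case_prod Node ` (P k n - ?B)"
    proof
      fix t assume t: "t \<in> G k n"
      then show "t \<in> case_prod Node ` (P k n - ?B)"
      proof (cases t)
        case Leaf then show ?thesis using t assms by (auto simp: G_def)
      next
        case (Node l r)
        show ?thesis
          by (rule image_eqI[where x="(l,r)"]) (use t Node in \<open>auto simp: G_def P_def good_Node simp del: caterpillar.simps\<close>)
      qed
    qed
  qed (auto simp: G_def P_def good_Node simp del: caterpillar.simps)
  moreover have "card (G k n) = card (P k n - ?B)"
    unfolding Geq by (rule card_image) (auto simp: inj_on_def)
  moreover have "card (P k n - ?B) = card (P k n) - card ?B"
    by (rule card_Diff_subset) (auto intro: finite_subset[OF _ finite_P])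
  moreover have "card ?B \<le> card (P k n)" by (rule card_mono[OF finite_P]) auto
  ultimately have "real (card (G k n)) = real (card (P k n)) - real (card ?B)" by simp
  also have "\<dots> = (\<Sum>i=0..n. real (card (G k i)) * real (card (G k (n - i)))) - (if n = k + 1 then 2 ^ (k - 1) else 0)"
    unfolding card_bad[OF assms] card_P by simp
  finally show ?thesis .
qed

unbundle fps_syntax

lemma G0: "G k 0 = {}"
proof -
  have "tsize t \<noteq> 0" for t using tsize_pos[of t] by linarith
  then show ?thesis by (auto simp: G_def)
qed
lemma G1: "k \<ge> 1 \<Longrightarrow> G k 1 = {Leaf}" using size1 by (auto simp: G_def)

lemma Fnth: "Fminus k $ n = real (card (G k n))"
  by (simp add: Fminus_def fcount_G G0)

lemma eq1:
  assumes "k \<ge> 1"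
  shows "Fminus k = fps_X + (Fminus k)\<^sup>2 - fps_const (2 ^ (k - 1)) * fps_X ^ (k + 1)"
proof (rule fps_ext)
  fix n
  have sq: "((Fminus k)\<^sup>2) $ n = (\<Sum>i=0..n. real (card (G k i)) * real (card (G k (n - i))))"
    by (simp add: power2_eq_square fps_mult_nth Fnth)
  show "Fminus k $ n = (fps_X + (Fminus k)\<^sup>2 - fps_const (2 ^ (k - 1)) * fps_X ^ (k + 1)) $ n"
  proof (cases "n \<ge> 2")
    case True
    show ?thesis using rec_G[OF assms True] sq True assms by (simp add: Fnth del: power_Suc)
  next
    case False
    then consider "n = 0" | "n = 1" by linarith
    then show ?thesis
    proof cases
      case 1 then show ?thesis by (simp add: Fnth G0)
    next
      case 2 then show ?thesis using assms sq G1[OF assms] by (simp add: Fnth G0 del: power_Suc)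
    qed
  qed
qed

lemma eq2:
  assumes "k \<ge> 1"
  shows "Fminus k = (1 - fps_radical (\<lambda>n x. root n x) 2
                         (1 - fps_const 4 * fps_X + fps_const (2 ^ (k + 1)) * fps_X ^ (k + 1)))
                     / fps_const 2"
proof -
  define F where "F = Fminus k"
  define A where "A = 1 - 2 * F"
  define c :: real where "c = 2 ^ (k - 1)"
  have F2: "F^2 = F - fps_X + fps_const c * fps_X ^ (k + 1)"
    using eq1[OF assms] unfolding F_def c_def by (simp add: algebra_simps)
  have c4: "fps_const 4 * fps_const c = fps_const ((2::real) ^ (k + 1))"
  proof -
    have "(4::real) * 2 ^ (k - 1) = 2 ^ (k + 1)"
    proof -
      obtain j where "k = Suc j" using assms by (cases k) auto
      then show ?thesis by simp
    qed
    then show ?thesis unfolding c_def by (simp only: fps_const_mult)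
  qed
  have "A ^ 2 = 1 - 4 * F + 4 * F^2"
    unfolding A_def power2_eq_square by algebra
  also have "\<dots> = 1 - fps_const 4 * F + fps_const 4 * F^2"
    by (simp add: numeral_fps_const)
  also have "\<dots> = 1 - fps_const 4 * fps_X + fps_const 4 * fps_const c * fps_X ^ (k + 1)"
    unfolding F2 by (simp add: algebra_simps)
  finally have A2: "A ^ 2 = 1 - fps_const 4 * fps_X + fps_const (2 ^ (k + 1)) * fps_X ^ (k + 1)"
    unfolding c4 .
  have A0: "A $ 0 = 1" unfolding A_def F_def by (simp add: Fnth G0)
  have "fps_radical (\<lambda>n x. root n x) (Suc 1) (A ^ Suc 1) = A"
    by (rule radical_power) (simp_all add: A0)
  then have R: "fps_radical (\<lambda>n x. root n x) 2 (1 - fps_const 4 * fps_X + fps_const (2 ^ (k + 1)) * fps_X ^ (k + 1)) = A"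
    using A2 by (simp add: numeral_2_eq_2)
  show ?thesis unfolding R unfolding A_def F_def by (simp add: numeral_fps_const)
qed


theorem mainTheorem1:
  fixes k :: nat
  assumes "k \<ge> 1"
  shows "Fminus k = fps_X + (Fminus k)\<^sup>2 - fps_const (2 ^ (k - 1)) * fps_X ^ (k + 1)
       \<and> Fminus k = (1 - fps_radical (\<lambda>n x. root n x) 2
                         (1 - fps_const 4 * fps_X + fps_const (2 ^ (k + 1)) * fps_X ^ (k + 1)))
                     / fps_const 2"
  using eq1[OF assms] eq2[OF assms] by blast

end
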